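(* Let $p$ be a prime, $q=p^l$, $m\ge1$, $n=2m$. Let $r=\rho(q-1)$ with $0\leqslant\rho\leqslant n-1$ and $\rho=2\rho'$ even, and let $I\subseteq M_r$ with $\{0,2\}\cap I=\{0\}$. Let $V$ be an $\mathbb{F}_q$-subspace of $\mathbb{F}_{q^n}$ of dimension $n-\rho$ over $\mathbb{F}_q$ which is not an $\mathbb{F}_{q^2}$-subspace of dimension $m-\rho'$ over $\mathbb{F}_{q^2}$, and let $\lambda\in\mathbb{F}_q^*$. Then the vector $x=(x_g)_{g\in\mathbb{F}_{q^n}^*}$ with $x_g=\lambda$ for $g\in V\setminus\{0\}$ and $x_g=0$ otherwise does not belong to $\mathcal{C}_q(r,I,n)^*$.
   Context: Let $N=q^n-1$ and $\alpha$ a primitive element of $\mathbb{F}_{q^n}$. Every integer $0\le u\le q^n-1$ is written $u=\sum_{i=0}^{n-1}u_iq^i$, $u_i\in\{0,\dots,q-1\}$; $\mathrm{wt}_q(u)=\sum u_i$, $O(u)=\sum_{i\text{ odd}}u_i$, $E(u)=\sum_{i\text{ even}}u_i$. For $-1\le r<n(q-1)$, $Z_r=\{\alpha^u\mid 0<u\le q^n-1,\ \mathrm{wt}_q(u)\le n(q-1)-r-1\}$. For $0\le r\le n(q-1)$ and integer $k\ge0$, $\Theta^{(r)}_k=\{\alpha^u\mid 0\le u\le q^n-1,\ \mathrm{wt}_q(u)=n(q-1)-r,\ |O(u)-E(u)|=k\}$. $M_r$ is the set of even (resp. odd) integers $k\in[0,m(q-1)]$ when $r$ is even (resp. odd). For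 $I\subseteq M_r$: $\overline I=M_r\setminus I$, $Z_{r,I}=Z_r\cup\bigcup_{k\in\overline I}\Theta^{(r)}_k$. $\mathcal{C}_q(r,I,n)^*$ is the cyclic code of length $N$ over $\mathbb{F}_q$ with coordinates indexed by $\mathbb{F}_{q^n}^*$ consisting of all $x=(x_g)$ with $\sum_g x_g g^{u}=0$ for every $u\in[1,N]$ with $\alpha^u\in Z_{r,I}$. *)

theory Defs
  imports Main "HOL-Computational_Algebra.Primes"
begin

definition digit :: "nat \<Rightarrow> nat \<Rightarrow> nat \<Rightarrow> nat" where
  "digit q u i = (u div q ^ i) mod q"

definition wt :: "nat \<Rightarrow> nat \<Rightarrow> nat \<Rightarrow> nat" where
  "wt q n u = (\<Sum>i<n. digit q u i)"

definition Osum :: "nat \<Rightarrow> nat \<Rightarrow> nat \<Rightarrow> nat" where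
  "Osum q n u = (\<Sum>i\<in>{i. i < n \<and> odd i}. digit q u i)"

definition Esum :: "nat \<Rightarrow> nat \<Rightarrow> nat \<Rightarrow> nat" where
  "Esum q n u = (\<Sum>i\<in>{i. i < n \<and> even i}. digit q u i)"

text \<open>The subfield F_q of a finite field (of order a power of q): the roots of X^q - X.\<close>
definition Fsub :: "nat \<Rightarrow> 'a::field set" where
  "Fsub q = {x. x ^ q = x}"

definition primitive_elem :: "'a::field \<Rightarrow> bool" where
  "primitive_elem \<alpha> \<longleftrightarrow> \<alpha> \<noteq> 0 \<and> (\<forall>g. g \<noteq> 0 \<longrightarrow> (\<exists>i::nat. \<alpha> ^ i = g))"

definition subspace_over :: "'a::field set \<Rightarrow> 'a set \<Rightarrow> bool" where
  "subspace_over K V \<longleftrightarrow> 0 \<in> V \<and> (\<forall>x\<in>V. \<forall>y\<in>V. x + y \<in> V)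
      \<and> (\<forall>c\<in>K. \<forall>x\<in>V. c * x \<in> V)"

definition dim_over :: "'a::field set \<Rightarrow> 'a set \<Rightarrow> nat \<Rightarrow> bool" where
  "dim_over K V d \<longleftrightarrow> subspace_over K V \<and>
     (\<exists>b :: nat \<Rightarrow> 'a. (\<forall>i<d. b i \<in> V)
        \<and> (\<forall>c. (\<forall>i<d. c i \<in> K) \<longrightarrow> (\<Sum>i<d. c i * b i) = 0 \<longrightarrow> (\<forall>i<d. c i = 0))
        \<and> (\<forall>v\<in>V. \<exists>c. (\<forall>i<d. c i \<in> K) \<and> v = (\<Sum>i<d. c i * b i)))"

definition Zr :: "nat \<Rightarrow> nat \<Rightarrow> 'a::field \<Rightarrow> int \<Rightarrow> 'a set" where
  "Zr q n \<alpha> r = {\<alpha> ^ u | u. 0 < u \<and> u \<le> q ^ n - 1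
      \<and> int (wt q n u) \<le> int (n * (q - 1)) - r - 1}"

definition Theta :: "nat \<Rightarrow> nat \<Rightarrow> 'a::field \<Rightarrow> int \<Rightarrow> nat \<Rightarrow> 'a set" where
  "Theta q n \<alpha> r k = {\<alpha> ^ u | u. u \<le> q ^ n - 1
      \<and> int (wt q n u) = int (n * (q - 1)) - r
      \<and> \<bar>int (Osum q n u) - int (Esum q n u)\<bar> = int k}"

definition Mr :: "nat \<Rightarrow> nat \<Rightarrow> int \<Rightarrow> nat set" where
  "Mr q m r = {k. k \<le> m * (q - 1) \<and> (even (int k) \<longleftrightarrow> even r)}"

definition ZrI :: "nat \<Rightarrow> nat \<Rightarrow> nat \<Rightarrow> 'a::field \<Rightarrow> int \<Rightarrow> nat set \<Rightarrow> 'a set" where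
  "ZrI q n m \<alpha> r I = Zr q n \<alpha> r \<union> (\<Union>k\<in>Mr q m r - I. Theta q n \<alpha> r k)"

text \<open>The code C_q(r,I,n)^*: words are functions on F_{q^n} whose coordinates at
  the nonzero elements lie in F_q (the coordinate at 0 is not a coordinate; fixed to 0).\<close>
definition code :: "nat \<Rightarrow> nat \<Rightarrow> nat \<Rightarrow> 'a::{finite,field} \<Rightarrow> int \<Rightarrow> nat set \<Rightarrow> ('a \<Rightarrow> 'a) set" where
  "code q n m \<alpha> r I = {x. x 0 = 0 \<and> (\<forall>g. g \<noteq> 0 \<longrightarrow> x g \<in> Fsub q) \<and>
      (\<forall>u\<in>{1..q ^ n - 1}. \<alpha> ^ u \<in> ZrI q n m \<alpha> r I \<longrightarrow>
          (\<Sum>g\<in>{g. g \<noteq> 0}. x g * g ^ u) = 0)}"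

end

theory Submission
  imports Defs "HOL-Computational_Algebra.Polynomial" "HOL-Number_Theory.Residues"
begin

lemma ff_power_card:
  fixes x :: "'a::{finite,field}"
  shows "x ^ card (UNIV :: 'a set) = x"
proof (cases "x = 0")
  case False
  have "x * (\<Prod>y\<in>UNIV-{0}. x * y) = x * x ^ (card (UNIV :: 'a set) - 1) * \<Prod>(UNIV-{0})"
    by (simp add: prod.distrib mult_ac)
  also have "x * x ^ (card (UNIV :: 'a set) - 1) = x ^ Suc (card (UNIV :: 'a set) - 1)"
    by (subst power_Suc) auto
  also have "Suc (card (UNIV :: 'a set) - 1) = card (UNIV :: 'a set)"
    using finite_UNIV_card_ge_0[where ?'a = 'a] by simp
  also have "(\<Prod>y\<in>UNIV-{0}. x * y) = (\<Prod>y\<in>UNIV-{0}. y)"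
    by (rule prod.reindex_bij_witness[of _ "\<lambda>y. y / x" "\<lambda>y. x * y"]) (use False in auto)
  finally show ?thesis
    by simp
qed (use finite_UNIV_card_ge_0[where ?'a = 'a] in auto)

lemma ff_CHAR:
  assumes "prime p" "card (UNIV :: 'a::{finite,field} set) = p ^ N"
  shows "CHAR('a) = p"
proof -
  have "CHAR('a) > 0" by (simp add: finite_imp_CHAR_pos)
  hence pc: "prime CHAR('a)" using prime_CHAR_semidom by blast
  have "CHAR('a) dvd p ^ N" using CHAR_dvd_CARD[where 'a='a] assms by simp
  hence "CHAR('a) dvd p" using pc prime_dvd_power by blast
  thus ?thesis using pc assms(1) by (simp add: primes_dvd_imp_eq)
qed

lemma frob_add:
  assumes "prime CHAR('a::field)" "s = CHAR('a) ^ e"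
  shows "((x::'a) + y) ^ s = x ^ s + y ^ s"
  using freshmans_dream'[OF assms] .

lemma frob_diff:
  assumes "prime CHAR('a::field)" "s = CHAR('a) ^ e"
  shows "((x::'a) - y) ^ s = x ^ s - y ^ s"
proof -
  have "((x - y) + y) ^ s = (x - y) ^ s + y ^ s" by (rule frob_add[OF assms])
  thus ?thesis by (simp add: algebra_simps)
qed

lemma frob_sum:
  assumes "prime CHAR('a::field)" "s = CHAR('a) ^ e"
  shows "(\<Sum>i\<in>A. f i :: 'a) ^ s = (\<Sum>i\<in>A. f i ^ s)"
  using freshmans_dream_sum'[OF assms] by blast

definition subf :: "'a::field set \<Rightarrow> bool" where
  "subf K \<longleftrightarrow> 0 \<in> K \<and> 1 \<in> K \<and> (\<forall>x\<in>K. \<forall>y\<in>K. x + y \<in> K \<and> x * y \<in> K)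
     \<and> (\<forall>x\<in>K. - x \<in> K \<and> inverse x \<in> K)"

lemma subfD:
  assumes "subf K"
  shows "0 \<in> K" "1 \<in> K" "x \<in> K \<Longrightarrow> y \<in> K \<Longrightarrow> x + y \<in> K"
    "x \<in> K \<Longrightarrow> y \<in> K \<Longrightarrow> x * y \<in> K" "x \<in> K \<Longrightarrow> - x \<in> K"
    "x \<in> K \<Longrightarrow> inverse x \<in> K"
    "x \<in> K \<Longrightarrow> y \<in> K \<Longrightarrow> x - y \<in> K"
    "x \<in> K \<Longrightarrow> y \<in> K \<Longrightarrow> x / y \<in> K"
  using assms unfolding subf_def
     apply blast+
  using assms unfolding subf_def diff_conv_add_uminus divide_inverse
  apply blast+
  done

lemma Fsub_subf:
  assumes "prime CHAR('a::field)" "s = CHAR('a) ^ e"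
  shows "subf (Fsub s :: 'a set)"
proof -
  have s0: "s > 0" using assms prime_gt_0_nat by simp
  have add: "(x + y) ^ s = x ^ s + y ^ s" for x y :: 'a by (rule frob_add[OF assms])
  have neg: "(- x) ^ s = - (x ^ s)" for x :: 'a
    using frob_diff[OF assms, of 0 x] s0 by simp
  show ?thesis unfolding subf_def Fsub_def
  proof (intro conjI ballI)
    show "(0::'a) \<in> {x. x ^ s = x}" using s0 by simp
    show "(1::'a) \<in> {x. x ^ s = x}" by simp
    fix x y :: 'a assume x: "x \<in> {x. x ^ s = x}"
    thus "- x \<in> {x. x ^ s = x}" using neg by simp
    show "inverse x \<in> {x. x ^ s = x}" using x by (simp add: power_inverse)
    assume y: "y \<in> {x. x ^ s = x}"
    show "x + y \<in> {x. x ^ s = x}" using x y add by simp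
    show "x * y \<in> {x. x ^ s = x}" using x y by (simp add: power_mult_distrib)
  qed
qed

lemma prim_order:
  fixes \<alpha> :: "'a::{finite,field}"
  assumes "primitive_elem \<alpha>"
  shows "\<alpha> ^ e = 1 \<longleftrightarrow> (card (UNIV :: 'a set) - 1) dvd e"
proof -
  define Q where "Q = card (UNIV :: 'a set)"
  have a0: "\<alpha> \<noteq> 0" using assms unfolding primitive_elem_def by auto
  have Q2: "Q \<ge> 2"
  proof -
    have "{0, 1::'a} \<subseteq> UNIV" by simp
    hence "card {0, 1::'a} \<le> Q" unfolding Q_def by (intro card_mono) auto
    thus ?thesis by simp
  qed
  have "\<alpha> ^ Q = \<alpha>" unfolding Q_def by (rule ff_power_card)
  moreover have "\<alpha> ^ Q = \<alpha> * \<alpha> ^ (Q - 1)" using Q2 by (cases Q) auto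
  ultimately have "\<alpha> * \<alpha> ^ (Q - 1) = \<alpha> * 1" by simp
  hence aN: "\<alpha> ^ (Q - 1) = 1" using a0 by simp
  show ?thesis
  proof
    assume "(card (UNIV :: 'a set) - 1) dvd e"
    then obtain t where "e = (Q - 1) * t" unfolding Q_def by auto
    hence "\<alpha> ^ e = (\<alpha> ^ (Q - 1)) ^ t" by (simp only: power_mult)
    thus "\<alpha> ^ e = 1" using aN by simp
  next
    assume ae: "\<alpha> ^ e = 1"
    define d where "d = e mod (Q - 1)"
    have "e = (Q - 1) * (e div (Q - 1)) + d" unfolding d_def by simp
    hence "\<alpha> ^ e = \<alpha> ^ ((Q - 1) * (e div (Q - 1)) + d)" by simp
    hence "\<alpha> ^ e = (\<alpha> ^ (Q - 1)) ^ (e div (Q - 1)) * \<alpha> ^ d"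
      by (simp only: power_add power_mult)
    hence "\<alpha> ^ e = \<alpha> ^ d" using aN by simp
    hence ad: "\<alpha> ^ d = 1" using ae by simp
    have "d = 0"
    proof (rule ccontr)
      assume "d \<noteq> 0"
      have "UNIV - {0} \<subseteq> (\<lambda>i. \<alpha> ^ i) ` {..<d}"
      proof
        fix g :: 'a assume "g \<in> UNIV - {0}"
        then obtain i where gi: "\<alpha> ^ i = g" using assms unfolding primitive_elem_def by auto
        have "i = d * (i div d) + i mod d" by simp
        hence "\<alpha> ^ i = \<alpha> ^ (d * (i div d) + i mod d)" by simp
        hence "\<alpha> ^ i = (\<alpha> ^ d) ^ (i div d) * \<alpha> ^ (i mod d)"
          by (simp only: power_add power_mult)
        hence "\<alpha> ^ i = \<alpha> ^ (i mod d)" using ad by simp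
        moreover have "i mod d < d" using \<open>d \<noteq> 0\<close> by simp
        ultimately show "g \<in> (\<lambda>i. \<alpha> ^ i) ` {..<d}" using gi by auto
      qed
      hence "card (UNIV - {0::'a}) \<le> card ((\<lambda>i. \<alpha> ^ i) ` {..<d})"
        by (intro card_mono) auto
      also have "\<dots> \<le> d" using card_image_le[of "{..<d}" "\<lambda>i. \<alpha> ^ i"] by simp
      finally have "Q - 1 \<le> d" unfolding Q_def by (simp add: card_Diff_singleton)
      moreover have "d < Q - 1" unfolding d_def using Q2 by simp
      ultimately show False by simp
    qed
    thus "(card (UNIV :: 'a set) - 1) dvd e" unfolding d_def Q_def by auto
  qed
qed

lemma card_Fsub_le:
  assumes "s \<ge> 2"
  shows "card (Fsub s :: 'a::{finite,field} set) \<le> s"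
proof -
  define P :: "'a poly" where "P = Polynomial.monom 1 s - [:0, 1:]"
  have dP: "degree P = s" unfolding P_def diff_conv_add_uminus using assms
    by (subst degree_add_eq_left) (auto simp: degree_monom_eq)
  hence "P \<noteq> 0" using assms by auto
  have "Fsub s = {x. poly P x = 0}" unfolding P_def Fsub_def
    by (auto simp: poly_monom)
  thus ?thesis using card_poly_roots_bound[OF \<open>P \<noteq> 0\<close>] dP by simp
qed

lemma card_Fsub_ge:
  fixes \<alpha> :: "'a::{finite,field}"
  assumes "primitive_elem \<alpha>" "s \<ge> 2" "(s - 1) dvd (card (UNIV :: 'a set) - 1)"
  shows "s \<le> card (Fsub s :: 'a set)"
proof -
  define N where "N = card (UNIV :: 'a set) - 1"
  define t where "t = N div (s - 1)"
  have Nt: "N = (s - 1) * t" unfolding t_def using assms(3) N_def by simp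
  have a0: "\<alpha> \<noteq> 0" using assms unfolding primitive_elem_def by auto
  have ord: "\<And>e. \<alpha> ^ e = 1 \<longleftrightarrow> N dvd e" using prim_order[OF assms(1)] N_def by simp
  have "card {0, 1::'a} \<le> card (UNIV :: 'a set)" by (intro card_mono) auto
  hence "N \<ge> 1" unfolding N_def by simp
  hence t0: "t > 0" using Nt by (cases t) auto
  define B where "B = insert 0 ((\<lambda>j. \<alpha> ^ (j * t)) ` {..<s - 1})"
  have inj: "inj_on (\<lambda>j. \<alpha> ^ (j * t)) {..<s - 1}"
  proof -
    have *: "\<alpha> ^ (j * t) \<noteq> \<alpha> ^ (j' * t)" if "j < j'" "j' < s - 1" for j j'
    proof
      assume eq: "\<alpha> ^ (j * t) = \<alpha> ^ (j' * t)"
      have "j' * t = j * t + (j' - j) * t" using that by (simp add: diff_mult_distrib)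
      hence "\<alpha> ^ (j' * t) = \<alpha> ^ (j * t) * \<alpha> ^ ((j' - j) * t)" by (simp add: power_add)
      hence "\<alpha> ^ ((j' - j) * t) = 1" using eq a0 by simp
      hence "N dvd (j' - j) * t" using ord by simp
      moreover have "(j' - j) * t > 0" using that t0 by simp
      moreover have "(j' - j) * t < (s - 1) * t" using that t0 by simp
      ultimately show False using Nt by (simp add: nat_dvd_not_less)
    qed
    show ?thesis unfolding inj_on_def
      using * by (metis lessThan_iff linorder_neqE_nat)
  qed
  have "0 \<notin> (\<lambda>j. \<alpha> ^ (j * t)) ` {..<s - 1}" using a0 by auto
  hence cB: "card B = s" unfolding B_def using card_image[OF inj] assms(2) by simp
  have "B \<subseteq> Fsub s"
  proof
    fix x assume "x \<in> B"
    show "x \<in> Fsub s"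
    proof (cases "x = 0")
      case True thus ?thesis using assms(2) by (simp add: Fsub_def)
    next
      case False
      then obtain j where xj: "x = \<alpha> ^ (j * t)" using \<open>x \<in> B\<close> unfolding B_def by auto
      have "x ^ (s - 1) = \<alpha> ^ (j * N)" unfolding xj Nt
        by (simp add: power_mult[symmetric] mult_ac)
      also have "\<dots> = 1" using ord by simp
      finally have "x ^ (s - 1) = 1" .
      moreover have "x ^ s = x * x ^ (s - 1)" using assms(2) by (cases s) auto
      ultimately have "x ^ s = x" by simp
      thus ?thesis by (simp add: Fsub_def)
    qed
  qed
  hence "card B \<le> card (Fsub s :: 'a set)" by (intro card_mono) auto
  thus ?thesis using cB by simp
qed

lemma prod_Fsub:
  assumes "card (Fsub q :: 'a::{finite,field} set) = q" "q \<ge> 2"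
  shows "(\<Prod>a\<in>Fsub q. y - a) = y ^ q - (y::'a)"
proof -
  define K where "K = (Fsub q :: 'a set)"
  define P1 :: "'a poly" where "P1 = (\<Prod>a\<in>K. [:-a, 1:])"
  define P2 :: "'a poly" where "P2 = Polynomial.monom 1 q - [:0, 1:]"
  have dP2: "degree P2 = q" unfolding P2_def diff_conv_add_uminus using assms
    by (subst degree_add_eq_left) (auto simp: degree_monom_eq)
  have dP1: "degree P1 = q" unfolding P1_def
    by (subst degree_prod_eq_sum_degree) (auto simp: K_def assms)
  have lc1: "lead_coeff P1 = 1" unfolding P1_def by (simp add: lead_coeff_prod)
  have c2: "Polynomial.coeff P2 q = 1" unfolding P2_def using assms by (simp add: coeff_pCons split: nat.split)
  have "P1 = P2"
  proof (rule poly_eqI_degree_lead_coeff[where n = q and A = K])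
    show "Polynomial.coeff P1 q = Polynomial.coeff P2 q" using lc1 dP1 c2 by simp
    show "q \<le> card K" using assms K_def by simp
    show "degree P1 \<le> q" "degree P2 \<le> q" using dP1 dP2 by auto
    fix z assume z: "z \<in> K"
    have "poly P1 z = (\<Prod>a\<in>K. z - a)" unfolding P1_def by (simp add: poly_prod)
    also have "\<dots> = 0" using z by (simp add: prod_zero_iff)
    also have "0 = poly P2 z" using z unfolding P2_def K_def Fsub_def by (simp add: poly_monom)
    finally show "poly P1 z = poly P2 z" .
  qed
  hence "poly P1 y = poly P2 y" by simp
  thus ?thesis unfolding P1_def P2_def K_def by (simp add: poly_prod poly_monom)
qed

fun spn :: "'a::field set \<Rightarrow> (nat \<Rightarrow> 'a) \<Rightarrow> nat \<Rightarrow> 'a set" where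
  "spn K b 0 = {0}"
| "spn K b (Suc t) = (\<lambda>(a, g). g + a * b t) ` (K \<times> spn K b t)"

lemma spn_char:
  "v \<in> spn K b t \<longleftrightarrow> (\<exists>c. (\<forall>i<t. c i \<in> K) \<and> v = (\<Sum>i<t. c i * b i))"
proof (induction t arbitrary: v)
  case 0
  show ?case by simp
next
  case (Suc t)
  show ?case
  proof
    assume "v \<in> spn K b (Suc t)"
    then obtain a g where ag: "a \<in> K" "g \<in> spn K b t" "v = g + a * b t" by auto
    then obtain c where c: "\<forall>i<t. c i \<in> K" "g = (\<Sum>i<t. c i * b i)" using Suc by auto
    define c' where "c' = c(t := a)"
    have "(\<Sum>i<t. c' i * b i) = (\<Sum>i<t. c i * b i)"
      by (intro sum.cong) (auto simp: c'_def)
    hence "v = (\<Sum>i<Suc t. c' i * b i)" using ag c by (simp add: c'_def)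
    moreover have "\<forall>i<Suc t. c' i \<in> K" using c ag by (auto simp: c'_def less_Suc_eq)
    ultimately show "\<exists>c. (\<forall>i<Suc t. c i \<in> K) \<and> v = (\<Sum>i<Suc t. c i * b i)" by blast
  next
    assume "\<exists>c. (\<forall>i<Suc t. c i \<in> K) \<and> v = (\<Sum>i<Suc t. c i * b i)"
    then obtain c where c: "\<forall>i<Suc t. c i \<in> K" "v = (\<Sum>i<Suc t. c i * b i)" by blast
    have "\<forall>i<t. c i \<in> K" using c(1) by auto
    hence "(\<Sum>i<t. c i * b i) \<in> spn K b t" using Suc.IH by blast
    moreover have "c t \<in> K" using c by auto
    moreover have "v = (\<Sum>i<t. c i * b i) + c t * b t" using c by simp
    ultimately show "v \<in> spn K b (Suc t)" by force
  qed
qed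

lemma spn_cong: "(\<And>i. i < t \<Longrightarrow> b i = b' i) \<Longrightarrow> spn K b t = spn K b' t"
proof (induction t)
  case 0 thus ?case by simp
next
  case (Suc t)
  have "spn K b t = spn K b' t" using Suc.prems by (intro Suc.IH) auto
  moreover have "b t = b' t" using Suc.prems by auto
  ultimately show ?case by simp
qed

lemma spn_zero: "subf K \<Longrightarrow> 0 \<in> spn K b t"
  unfolding spn_char by (rule exI[of _ "\<lambda>_. 0"]) (simp add: subfD(1))

lemma spn_add:
  assumes "subf K" "x \<in> spn K b t" "y \<in> spn K b t"
  shows "x + y \<in> spn K b t"
proof -
  obtain c where c: "\<forall>i<t. c i \<in> K" "x = (\<Sum>i<t. c i * b i)" using assms(2) unfolding spn_char by blast
  obtain d where d: "\<forall>i<t. d i \<in> K" "y = (\<Sum>i<t. d i * b i)" using assms(3) unfolding spn_char by blast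
  have "x + y = (\<Sum>i<t. (c i + d i) * b i)" using c d by (simp add: sum.distrib algebra_simps)
  moreover have "\<forall>i<t. c i + d i \<in> K" using c d subfD[OF assms(1)] by auto
  ultimately show ?thesis unfolding spn_char by (intro exI[of _ "\<lambda>i. c i + d i"]) simp
qed

lemma spn_smult:
  assumes "subf K" "a \<in> K" "x \<in> spn K b t"
  shows "a * x \<in> spn K b t"
proof -
  obtain c where c: "\<forall>i<t. c i \<in> K" "x = (\<Sum>i<t. c i * b i)" using assms(3) unfolding spn_char by blast
  have "a * x = (\<Sum>i<t. (a * c i) * b i)" using c by (simp add: sum_distrib_left algebra_simps)
  moreover have "\<forall>i<t. a * c i \<in> K" using c subfD[OF assms(1)] assms(2) by auto
  ultimately show ?thesis unfolding spn_char by (intro exI[of _ "\<lambda>i. a * c i"]) simp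
qed

lemma spn_neg:
  assumes "subf K" "x \<in> spn K b t"
  shows "- x \<in> spn K b t"
  using spn_smult[OF assms(1) subfD(5)[OF assms(1) subfD(2)[OF assms(1)]] assms(2)] by simp

lemma spn_diff:
  assumes "subf K" "x \<in> spn K b t" "y \<in> spn K b t"
  shows "x - y \<in> spn K b t"
  using spn_add[OF assms(1,2) spn_neg[OF assms(1,3)]] by simp

lemma spn_subset:
  assumes "\<And>i. i < t \<Longrightarrow> b i \<in> V" "0 \<in> V" "\<And>x y. x \<in> V \<Longrightarrow> y \<in> V \<Longrightarrow> x + y \<in> V"
    "\<And>a x. a \<in> K \<Longrightarrow> x \<in> V \<Longrightarrow> a * x \<in> V"
  shows "spn K b t \<subseteq> V"
  using assms(1)
proof (induction t)
  case 0 thus ?case using assms(2) by simp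
next
  case (Suc t)
  have "spn K b t \<subseteq> V" using Suc by auto
  moreover have "b t \<in> V" using Suc.prems by auto
  ultimately show ?case using assms(3,4) by auto
qed

definition good :: "'a::field set \<Rightarrow> (nat \<Rightarrow> 'a) \<Rightarrow> nat \<Rightarrow> bool" where
  "good K b t \<longleftrightarrow> (\<forall>s<t. b s \<notin> spn K b s)"

definition std_indep :: "'a::field set \<Rightarrow> (nat \<Rightarrow> 'a) \<Rightarrow> nat \<Rightarrow> bool" where
  "std_indep K b t \<longleftrightarrow> (\<forall>c. (\<forall>i<t. c i \<in> K) \<longrightarrow> (\<Sum>i<t. c i * b i) = 0 \<longrightarrow> (\<forall>i<t. c i = 0))"

lemma spn_inj:
  assumes "subf K" "b t \<notin> spn K b t"
  shows "inj_on (\<lambda>(a, g). g + a * b t) (K \<times> spn K b t)"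
proof (rule inj_onI, clarsimp)
  fix a g a' g'
  assume a: "a \<in> K" "a' \<in> K" and g: "g \<in> spn K b t" "g' \<in> spn K b t"
    and eq: "g + a * b t = g' + a' * b t"
  have "a = a'"
  proof (rule ccontr)
    assume ne: "a \<noteq> a'"
    have "(a' - a) * b t = g - g'" using eq by (simp add: algebra_simps)
    hence "b t = inverse (a' - a) * (g - g')" using ne by (simp add: field_simps)
    moreover have "inverse (a' - a) \<in> K" using subfD[OF assms(1)] a by auto
    moreover have "g - g' \<in> spn K b t" using spn_diff[OF assms(1) g] .
    ultimately have "b t \<in> spn K b t" using spn_smult[OF assms(1)] by simp
    thus False using assms(2) by simp
  qed
  thus "a = a' \<and> g = g'" using eq by simp
qed

lemma finite_spn: "finite K \<Longrightarrow> finite (spn K b t)"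
  by (induction t) auto

lemma card_spn:
  assumes "subf K" "finite K" "good K b t"
  shows "card (spn K b t) = card K ^ t"
  using assms(3)
proof (induction t)
  case 0 thus ?case by simp
next
  case (Suc t)
  have g: "good K b t" "b t \<notin> spn K b t" using Suc.prems unfolding good_def by auto
  have "card (spn K b (Suc t)) = card (K \<times> spn K b t)"
    using card_image[OF spn_inj[OF assms(1) g(2)]] by simp
  also have "\<dots> = card K * card K ^ t" using Suc.IH[OF g(1)] by (simp add: card_cartesian_product)
  finally show ?case by simp
qed

lemma std_indep_good:
  assumes "subf K" "std_indep K b t"
  shows "good K b t"
  unfolding good_def
proof (intro allI impI notI)
  fix s assume st: "s < t" and bs: "b s \<in> spn K b s"
  then obtain c where c: "\<forall>i<s. c i \<in> K" "b s = (\<Sum>i<s. c i * b i)" unfolding spn_char by blast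
  define c' where "c' i = (if i < s then c i else if i = s then -1 else 0)" for i
  have "(\<Sum>i<t. c' i * b i) = (\<Sum>i<Suc s. c' i * b i)"
    using st by (intro sum.mono_neutral_right) (auto simp: c'_def)
  also have "\<dots> = (\<Sum>i<s. c i * b i) - b s" by (simp add: c'_def)
  also have "\<dots> = 0" using c by simp
  finally have "(\<Sum>i<t. c' i * b i) = 0" .
  moreover have "\<forall>i<t. c' i \<in> K" using c subfD[OF assms(1)] by (auto simp: c'_def)
  ultimately have "c' s = 0" using assms(2) st unfolding std_indep_def by blast
  thus False by (simp add: c'_def)
qed

lemma good_std_indep:
  assumes "subf K" "good K b t"
  shows "std_indep K b t"
  using assms(2)
proof (induction t)
  case 0 thus ?case by (simp add: std_indep_def)
next
  case (Suc t)
  have g: "good K b t" "b t \<notin> spn K b t" using Suc.prems unfolding good_def by auto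
  show ?case unfolding std_indep_def
  proof (rule allI, intro impI)
    fix c assume cK: "\<forall>i<Suc t. c i \<in> K" and s: "(\<Sum>i<Suc t. c i * b i) = 0"
    have ct: "c t = 0"
    proof (rule ccontr)
      assume ne: "c t \<noteq> 0"
      have "(\<Sum>i<t. c i * b i) + c t * b t = 0" using s by simp
      hence "b t = (\<Sum>i<t. (- c i / c t) * b i)" using ne
        by (simp add: sum_distrib_left[symmetric] field_simps sum_divide_distrib[symmetric]
                 sum_negf eq_neg_iff_add_eq_0 add.commute)
      moreover have "\<forall>i<t. - c i / c t \<in> K" using cK subfD[OF assms(1)] by auto
      ultimately have "b t \<in> spn K b t" unfolding spn_char by (intro exI[of _ "\<lambda>i. - c i / c t"]) simp
      thus False using g by simp
    qed
    hence "(\<Sum>i<t. c i * b i) = 0" using s by simp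
    hence "\<forall>i<t. c i = 0" using Suc.IH[OF g(1)] cK unfolding std_indep_def by auto
    thus "\<forall>i<Suc t. c i = 0" using ct by (auto simp: less_Suc_eq)
  qed
qed

lemma Fsub_pow:
  assumes "a \<in> Fsub q"
  shows "a ^ (q ^ j) = a"
proof (induction j)
  case 0 thus ?case by simp
next
  case (Suc j)
  have "a ^ (q ^ Suc j) = (a ^ (q ^ j)) ^ q" by (simp add: power_mult[symmetric] mult.commute)
  also have "\<dots> = a" using Suc assms by (simp add: Fsub_def)
  finally show ?case .
qed

lemma prod_lin:
  assumes cK: "card (Fsub q :: 'a::{finite,field} set) = q" "q \<ge> 2"
  shows "(\<Prod>a\<in>Fsub q. Y - a * \<beta>) = Y ^ q - \<beta> ^ (q - 1) * (Y::'a)"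
proof (cases "\<beta> = 0")
  case True
  thus ?thesis using assms by simp
next
  case False
  have "(\<Prod>a\<in>Fsub q. Y - a * \<beta>) = (\<Prod>a\<in>Fsub q. \<beta> * (Y / \<beta> - a))"
    using False by (intro prod.cong) (auto simp: field_simps)
  also have "\<dots> = \<beta> ^ q * (\<Prod>a\<in>Fsub q. Y / \<beta> - a)"
    by (simp add: prod.distrib cK)
  also have "(\<Prod>a\<in>Fsub q. Y / \<beta> - a) = (Y / \<beta>) ^ q - Y / \<beta>"
    by (rule prod_Fsub[OF cK])
  also have "\<beta> ^ q * ((Y / \<beta>) ^ q - Y / \<beta>) = Y ^ q - \<beta> ^ q / \<beta> * Y"
    using False by (simp add: field_simps power_divide)
  also have "\<beta> ^ q / \<beta> = \<beta> ^ (q - 1)"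
    using False assms(2) by (simp add: power_diff)
  finally show ?thesis .
qed

lemma Lpoly_exists:
  fixes b :: "nat \<Rightarrow> 'a::{finite,field}"
  assumes ch: "prime CHAR('a)" "q = CHAR('a) ^ e" and q2: "q \<ge> 2"
    and cK: "card (Fsub q :: 'a set) = q"
    and gd: "good (Fsub q) b t"
  shows "\<exists>c. c t = 1 \<and> (\<forall>j>t. c j = 0) \<and>
           (\<forall>x. (\<Prod>g\<in>spn (Fsub q) b t. x - g) = (\<Sum>j\<le>t. c j * x ^ (q ^ j)))"
  using gd
proof (induction t)
  case 0
  show ?case by (rule exI[of _ "\<lambda>j. if j = 0 then 1 else 0"]) simp
next
  case (Suc t)
  define K where "K = (Fsub q :: 'a set)"
  have sK: "subf K" unfolding K_def using Fsub_subf[OF ch] .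
  have g: "good K b t" "b t \<notin> spn K b t" using Suc.prems unfolding good_def K_def by auto
  obtain c where c: "c t = 1" "\<forall>j>t. c j = 0"
    "\<And>x. (\<Prod>g\<in>spn K b t. x - g) = (\<Sum>j\<le>t. c j * x ^ (q ^ j))"
    using Suc.IH g(1) unfolding K_def by blast
  define Lf where "Lf x = (\<Sum>j\<le>t. c j * x ^ (q ^ j))" for x
  have frobj: "(x - y) ^ (q ^ j) = x ^ (q ^ j) - y ^ (q ^ j)" for x y :: 'a and j
    using frob_diff[OF ch(1), of "q ^ j" "e * j"] ch(2) by (simp add: power_mult)
  have Ladd: "Lf (x - y) = Lf x - Lf y" for x y
    unfolding Lf_def by (simp add: frobj right_diff_distrib sum_subtractf)
  have Lsc: "Lf (a * y) = a * Lf y" if "a \<in> K" for a y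
  proof -
    have "Lf (a * y) = (\<Sum>j\<le>t. a * (c j * y ^ (q ^ j)))"
      unfolding Lf_def using Fsub_pow[of a q] that K_def
      by (intro sum.cong) (auto simp: power_mult_distrib)
    thus ?thesis unfolding Lf_def by (simp add: sum_distrib_left)
  qed
  define \<beta> where "\<beta> = Lf (b t)"
  define c' where "c' j = (if j = 0 then 0 else c (j - 1) ^ q) - \<beta> ^ (q - 1) * c j" for j
  have inj: "inj_on (\<lambda>(a, g). g + a * b t) (K \<times> spn K b t)" by (rule spn_inj[OF sK g(2)])
  have main: "(\<Prod>g\<in>spn K b (Suc t). x - g) = (\<Sum>j\<le>Suc t. c' j * x ^ (q ^ j))" for x
  proof -
    have "(\<Prod>g\<in>spn K b (Suc t). x - g) = (\<Prod>p\<in>K \<times> spn K b t. x - (case p of (a, g) \<Rightarrow> g + a * b t))"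
      by (simp add: prod.reindex[OF inj] comp_def)
    also have "\<dots> = (\<Prod>p\<in>K \<times> spn K b t. (case p of (a, g) \<Rightarrow> (x - a * b t) - g))"
      by (intro prod.cong) (auto simp: algebra_simps)
    also have "\<dots> = (\<Prod>a\<in>K. \<Prod>g\<in>spn K b t. (x - a * b t) - g)"
      by (rule prod.cartesian_product[symmetric])
    also have "\<dots> = (\<Prod>a\<in>K. Lf (x - a * b t))" using c(3) unfolding Lf_def by simp
    also have "\<dots> = (\<Prod>a\<in>K. Lf x - a * \<beta>)"
      by (intro prod.cong) (auto simp: Ladd Lsc \<beta>_def)
    also have "\<dots> = Lf x ^ q - \<beta> ^ (q - 1) * Lf x"
      unfolding K_def by (rule prod_lin[OF cK q2])
    also have "Lf x ^ q = (\<Sum>j\<le>t. (c j * x ^ (q ^ j)) ^ q)"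
      unfolding Lf_def by (rule frob_sum[OF ch])
    also have "\<dots> = (\<Sum>j\<le>t. c j ^ q * x ^ (q ^ Suc j))"
    proof (intro sum.cong refl)
      fix j
      have "(x ^ (q ^ j)) ^ q = x ^ (q ^ Suc j)" by (simp add: power_mult[symmetric] mult.commute)
      thus "(c j * x ^ (q ^ j)) ^ q = c j ^ q * x ^ (q ^ Suc j)" by (simp add: power_mult_distrib)
    qed
    also have "\<dots> = (\<Sum>j\<le>Suc t. (if j = 0 then 0 else c (j - 1) ^ q) * x ^ (q ^ j))"
      by (subst sum.atMost_Suc_shift) simp
    also have "Lf x = (\<Sum>j\<le>Suc t. c j * x ^ (q ^ j))"
      unfolding Lf_def using c(2) by simp
    finally have P: "(\<Prod>g\<in>spn K b (Suc t). x - g) = (\<Sum>j\<le>Suc t. (if j = 0 then 0 else c (j - 1) ^ q) * x ^ (q ^ j))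
       - \<beta> ^ (q - 1) * (\<Sum>j\<le>Suc t. c j * x ^ (q ^ j))" .
    have "(\<Sum>j\<le>Suc t. c' j * x ^ (q ^ j)) = (\<Sum>j\<le>Suc t. (if j = 0 then 0 else c (j - 1) ^ q) * x ^ (q ^ j))
       - \<beta> ^ (q - 1) * (\<Sum>j\<le>Suc t. c j * x ^ (q ^ j))"
      unfolding c'_def sum_distrib_left sum_subtractf[symmetric]
      by (intro sum.cong refl) (simp add: algebra_simps)
    thus ?thesis using P by simp
  qed
  have "c' (Suc t) = 1" using c q2 by (simp add: c'_def)
  moreover have "\<forall>j>Suc t. c' j = 0" using c q2 by (simp add: c'_def)
  ultimately show ?case using main unfolding K_def by blast
qed

definition DD :: "'a::field set \<Rightarrow> nat \<Rightarrow> 'a" where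
  "DD A t = (\<Sum>g\<in>A. g ^ t / (\<Prod>h\<in>A - {g}. g - h))"

lemma DD_rec:
  assumes "finite A" "a \<in> A"
  shows "DD A (Suc t) - a * DD A t = DD (A - {a}) t"
proof -
  have "DD A (Suc t) - a * DD A t = (\<Sum>g\<in>A. g ^ t * (g - a) / (\<Prod>h\<in>A - {g}. g - h))"
    unfolding DD_def by (simp add: sum_distrib_left sum_subtractf[symmetric] diff_divide_distrib algebra_simps)
  also have "\<dots> = (\<Sum>g\<in>A - {a}. g ^ t * (g - a) / (\<Prod>h\<in>A - {g}. g - h))"
    using assms by (intro sum.mono_neutral_right) auto
  also have "\<dots> = (\<Sum>g\<in>A - {a}. g ^ t / (\<Prod>h\<in>A - {a} - {g}. g - h))"
  proof (intro sum.cong refl)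
    fix g assume g: "g \<in> A - {a}"
    have "(\<Prod>h\<in>A - {g}. g - h) = (g - a) * (\<Prod>h\<in>A - {g} - {a}. g - h)"
      using g assms by (subst prod.remove[of _ a]) auto
    moreover have "A - {g} - {a} = A - {a} - {g}" by auto
    moreover have "g - a \<noteq> 0" using g by auto
    ultimately show "g ^ t * (g - a) / (\<Prod>h\<in>A - {g}. g - h) = g ^ t / (\<Prod>h\<in>A - {a} - {g}. g - h)"
      by simp
  qed
  finally show ?thesis unfolding DD_def .
qed

lemma DD_main:
  assumes "finite A" "card A = N" "N \<ge> 1"
  shows "(\<forall>t. t + 1 < N \<longrightarrow> DD A t = 0) \<and> DD A (N - 1) = 1"
  using assms
proof (induction N arbitrary: A rule: nat_less_induct)
  case (1 N A)
  show ?case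
  proof (cases "N = 1")
    case True
    then obtain a where "A = {a}" using 1 card_1_singletonE by metis
    thus ?thesis using True by (simp add: DD_def)
  next
    case False
    hence N2: "N \<ge> 2" using 1 by simp
    obtain a where a: "a \<in> A" using 1 N2 by fastforce
    have "card (A - {a}) \<ge> 1" using 1 a N2 by simp
    hence "A - {a} \<noteq> {}" by (metis card.empty not_one_le_zero)
    then obtain b where b: "b \<in> A - {a}" by blast
    have ca: "card (A - {a}) = N - 1" and cb: "card (A - {b}) = N - 1" using 1 a b by auto
    have IHa: "(\<forall>t. t + 1 < N - 1 \<longrightarrow> DD (A - {a}) t = 0) \<and> DD (A - {a}) (N - 1 - 1) = 1"
      using 1 ca N2 by (intro "1.IH"[rule_format]) auto
    have IHb: "(\<forall>t. t + 1 < N - 1 \<longrightarrow> DD (A - {b}) t = 0) \<and> DD (A - {b}) (N - 1 - 1) = 1"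
      using 1 cb N2 by (intro "1.IH"[rule_format]) auto
    have z: "DD A t = 0" if t: "t + 1 < N" for t
    proof -
      have eq: "DD (A - {a}) t = DD (A - {b}) t"
      proof (cases "t + 1 < N - 1")
        case True thus ?thesis using IHa IHb by simp
      next
        case False hence "t = N - 1 - 1" using t by simp
        thus ?thesis using IHa IHb by simp
      qed
      have ra: "DD A (Suc t) - a * DD A t = DD (A - {a}) t" using DD_rec[OF \<open>finite A\<close> a] .
      have rb: "DD A (Suc t) - b * DD A t = DD (A - {b}) t" using DD_rec[OF \<open>finite A\<close>] b by auto
      have "(b - a) * DD A t = (DD A (Suc t) - a * DD A t) - (DD A (Suc t) - b * DD A t)"
        by (simp add: algebra_simps)
      also have "\<dots> = 0" using ra rb eq by simp
      finally have "(b - a) * DD A t = 0" .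
      moreover have "b - a \<noteq> 0" using b by auto
      ultimately show ?thesis by simp
    qed
    have "DD A (Suc (N - 2)) - a * DD A (N - 2) = DD (A - {a}) (N - 2)" using DD_rec[OF \<open>finite A\<close> a] .
    moreover have "DD A (N - 2) = 0" using z N2 by simp
    moreover have "Suc (N - 2) = N - 1" "N - 1 - 1 = N - 2" using N2 by auto
    ultimately have "DD A (N - 1) = 1" using IHa by simp
    thus ?thesis using z by blast
  qed
qed

lemma S_init:
  fixes V :: "'a::field set"
  assumes fin: "finite V" and z: "0 \<in> V" and cl: "\<And>x y. x \<in> V \<Longrightarrow> y \<in> V \<Longrightarrow> x - y \<in> V"
    and cV: "card V = N" and N1: "N \<ge> 1"
  shows "t + 1 < N \<Longrightarrow> (\<Sum>g\<in>V. g ^ t) = 0"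
    and "(\<Sum>g\<in>V. g ^ (N - 1)) = (\<Prod>h\<in>V - {0}. - h)"
proof -
  define P0 where "P0 = (\<Prod>h\<in>V - {0}. - h)"
  have P0: "P0 \<noteq> 0" unfolding P0_def using fin by (simp add: prod_zero_iff)
  have clp: "x + y \<in> V" if "x \<in> V" "y \<in> V" for x y
    using cl[OF that(1) cl[OF z that(2)]] by simp
  have den: "(\<Prod>h\<in>V - {g}. g - h) = P0" if g: "g \<in> V" for g
    unfolding P0_def
    by (rule prod.reindex_bij_witness[of _ "\<lambda>h'. h' + g" "\<lambda>h. h - g"]) (use clp cl g in auto)
  have DDS: "DD V t = (\<Sum>g\<in>V. g ^ t) / P0" for t
    unfolding DD_def by (simp add: den sum_divide_distrib)
  have M: "(\<forall>t. t + 1 < N \<longrightarrow> DD V t = 0) \<and> DD V (N - 1) = 1" by (rule DD_main[OF fin cV N1])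
  show "t + 1 < N \<Longrightarrow> (\<Sum>g\<in>V. g ^ t) = 0" using M DDS[of t] P0 by simp
  show "(\<Sum>g\<in>V. g ^ (N - 1)) = (\<Prod>h\<in>V - {0}. - h)"
    using M DDS[of "N - 1"] P0 unfolding P0_def by (simp add: field_simps)
qed

lemma S_rec:
  fixes V :: "'a::field set"
  assumes L: "\<And>g. g \<in> V \<Longrightarrow> (\<Sum>j\<le>k. c j * g ^ (q ^ j)) = 0" and ck: "c k = 1"
  shows "(\<Sum>g\<in>V. g ^ (w + q ^ k)) = - (\<Sum>j<k. c j * (\<Sum>g\<in>V. g ^ (w + q ^ j)))"
proof -
  have "0 = (\<Sum>g\<in>V. g ^ w * (\<Sum>j\<le>k. c j * g ^ (q ^ j)))" using L by simp
  also have "\<dots> = (\<Sum>j\<le>k. c j * (\<Sum>g\<in>V. g ^ (w + q ^ j)))"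
    by (simp add: sum_distrib_left sum_distrib_right power_add mult_ac sum.swap[of _ V])
  also have "\<dots> = (\<Sum>j<k. c j * (\<Sum>g\<in>V. g ^ (w + q ^ j))) + (\<Sum>g\<in>V. g ^ (w + q ^ k))"
    using ck by (simp add: lessThan_Suc_atMost[symmetric])
  finally show ?thesis by (simp add: eq_neg_iff_add_eq_0 add.commute)
qed

lemma pow_facts:
  fixes q :: nat
  assumes "q \<ge> 2"
  shows "l < k \<Longrightarrow> q ^ l < q ^ k" "l < k \<Longrightarrow> 2 * q ^ l \<le> q ^ k"
proof -
  assume lk: "l < k"
  show "q ^ l < q ^ k" using lk assms by (simp add: power_strict_increasing)
  have "q ^ Suc l \<le> q ^ k" using lk assms by (intro power_increasing) auto
  hence 1: "q * q ^ l \<le> q ^ k" by simp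
  have 2: "2 * q ^ l \<le> q * q ^ l" by (rule mult_right_mono) (use assms in auto)
  show "2 * q ^ l \<le> q ^ k" using le_trans[OF 2 1] .
qed

lemma S_key:
  fixes V :: "'a::field set"
  assumes q2: "q \<ge> 2" and ik: "i < k"
    and L: "\<And>g. g \<in> V \<Longrightarrow> (\<Sum>j\<le>k. c j * g ^ (q ^ j)) = 0" and ck: "c k = 1"
    and S0: "\<And>t. t + 1 < q ^ k \<Longrightarrow> (\<Sum>g\<in>V. g ^ t) = 0"
    and S1: "(\<Sum>g\<in>V. g ^ (q ^ k - 1)) = P0"
  shows "(\<Sum>g\<in>V. g ^ (2 * q ^ k - q ^ i - 1)) = - (c i * P0)"
proof -
  define S where "S t = (\<Sum>g\<in>V. g ^ t)" for t
  have rec: "S (w + q ^ k) = - (\<Sum>j<k. c j * S (w + q ^ j))" for w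
    unfolding S_def by (rule S_rec[OF L ck])
  have qi: "q ^ i < q ^ k" using pow_facts(1)[OF q2 ik] .
  have other: "S (q ^ k - q ^ i - 1 + q ^ l) = 0" if lk: "l < k" "l \<noteq> i" for l
  proof (cases "l < i")
    case True
    have "q ^ l < q ^ i" using pow_facts(1)[OF q2 True] .
    hence "q ^ k - q ^ i - 1 + q ^ l + 1 < q ^ k" using qi by linarith
    thus ?thesis unfolding S_def by (rule S0)
  next
    case False
    hence il: "i < l" using lk by simp
    have qil: "q ^ i < q ^ l" using pow_facts(1)[OF q2 il] .
    have "q ^ k - q ^ i - 1 + q ^ l = (q ^ l - q ^ i - 1) + q ^ k" using qi qil by linarith
    hence "S (q ^ k - q ^ i - 1 + q ^ l) = - (\<Sum>h<k. c h * S (q ^ l - q ^ i - 1 + q ^ h))"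
      using rec by simp
    also have "\<dots> = 0"
    proof -
      have "S (q ^ l - q ^ i - 1 + q ^ h) = 0" if hk: "h < k" for h
      proof -
        have k1: "k = Suc (k - 1)" using ik by simp
        have a: "q ^ l \<le> q ^ (k - 1)" using lk q2 by (intro power_increasing) auto
        have b: "q ^ h \<le> q ^ (k - 1)" using hk q2 by (intro power_increasing) auto
        have c: "2 * q ^ (k - 1) \<le> q ^ k" using pow_facts(2)[OF q2, of "k - 1" k] ik by simp
        have "q ^ i \<ge> 1" using q2 by simp
        hence "q ^ l - q ^ i - 1 + q ^ h + 1 < q ^ k" using a b c qil by linarith
        thus ?thesis unfolding S_def by (rule S0)
      qed
      thus ?thesis by simp
    qed
    finally show ?thesis .
  qed
  have "2 * q ^ k - q ^ i - 1 = (q ^ k - q ^ i - 1) + q ^ k" using qi by linarith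
  hence "S (2 * q ^ k - q ^ i - 1) = - (\<Sum>l<k. c l * S (q ^ k - q ^ i - 1 + q ^ l))"
    using rec by simp
  also have "(\<Sum>l<k. c l * S (q ^ k - q ^ i - 1 + q ^ l)) = c i * S (q ^ k - q ^ i - 1 + q ^ i)"
    using ik other by (subst sum.remove[of _ i]) (auto intro!: sum.neutral)
  also have "q ^ k - q ^ i - 1 + q ^ i = q ^ k - 1" using qi by linarith
  finally show ?thesis using S1 unfolding S_def by simp
qed

lemma digit_sum:
  assumes "\<And>j. d j < q"
  shows "digit q (\<Sum>j<N. d j * q ^ j) i = (if i < N then d i else 0)"
  using assms
proof (induction i arbitrary: N d)
  case 0
  show ?case
  proof (cases N)
    case 0 thus ?thesis by (simp add: digit_def)
  next
    case (Suc N')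
    have "(\<Sum>j<N. d j * q ^ j) = d 0 + q * (\<Sum>j<N'. d (Suc j) * q ^ j)"
      unfolding Suc sum.lessThan_Suc_shift by (simp add: sum_distrib_left mult_ac)
    thus ?thesis using "0.prems"[of 0] Suc by (simp add: digit_def)
  qed
next
  case (Suc i)
  show ?case
  proof (cases N)
    case 0 thus ?thesis by (simp add: digit_def)
  next
    case (Suc N')
    have e: "(\<Sum>j<N. d j * q ^ j) = d 0 + q * (\<Sum>j<N'. d (Suc j) * q ^ j)"
      unfolding Suc sum.lessThan_Suc_shift by (simp add: sum_distrib_left mult_ac)
    have q0: "q > 0" using Suc.prems[of 0] by simp
    have hd: "(\<Sum>j<N. d j * q ^ j) div q = (\<Sum>j<N'. d (Suc j) * q ^ j)"
      unfolding e using Suc.prems[of 0] q0 by simp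
    have "digit q (\<Sum>j<N. d j * q ^ j) (Suc i) = (\<Sum>j<N. d j * q ^ j) div q div q ^ i mod q"
      unfolding digit_def power_Suc div_mult2_eq ..
    hence "digit q (\<Sum>j<N. d j * q ^ j) (Suc i) = digit q (\<Sum>j<N'. d (Suc j) * q ^ j) i"
      unfolding hd digit_def .
    also have "\<dots> = (if i < N' then d (Suc i) else 0)" using Suc.IH[of "\<lambda>j. d (Suc j)" N'] Suc.prems by simp
    finally show ?thesis using Suc by simp
  qed
qed

lemma geom_nat:
  fixes q :: nat
  assumes "q \<ge> 1"
  shows "(\<Sum>j<k. (q - 1) * q ^ j) + 1 = q ^ k"
proof (induction k)
  case 0 thus ?case by simp
next
  case (Suc k)
  have "(\<Sum>j<Suc k. (q - 1) * q ^ j) + 1 = ((\<Sum>j<k. (q - 1) * q ^ j) + 1) + (q - 1) * q ^ k" by simp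
  also have "\<dots> = q ^ k + (q - 1) * q ^ k" using Suc by simp
  also have "\<dots> = q * q ^ k" using assms by (simp add: algebra_simps)
  finally show ?case by simp
qed

lemma card_odd_below: "card {j. j < 2 * a \<and> odd j} = a"
proof (induction a)
  case 0 thus ?case by simp
next
  case (Suc a)
  have "{j. j < 2 * Suc a \<and> odd j} = insert (2 * a + 1) {j. j < 2 * a \<and> odd j}"
    unfolding set_eq_iff by (simp, presburger)
  thus ?case using Suc by simp
qed

lemma card_even_below: "card {j. j < 2 * a \<and> even j} = a"
proof (induction a)
  case 0 thus ?case by simp
next
  case (Suc a)
  have "{j. j < 2 * Suc a \<and> even j} = insert (2 * a) {j. j < 2 * a \<and> even j}"
    unfolding set_eq_iff by (simp, presburger)
  thus ?case using Suc by simp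
qed

lemma digits_u:
  fixes q :: nat
  assumes q2: "q \<ge> 2" and k: "k = 2 * a" "a \<ge> 1" and i: "odd i" "i < k" and kn: "k < n"
  shows "wt q n (2 * q ^ k - q ^ i - 1) = k * (q - 1)"
    and "Osum q n (2 * q ^ k - q ^ i - 1) = a * (q - 1) - 1"
    and "Esum q n (2 * q ^ k - q ^ i - 1) = a * (q - 1) + 1"
    and "1 \<le> 2 * q ^ k - q ^ i - 1" and "2 * q ^ k - q ^ i - 1 \<le> q ^ n - 1"
proof -
  define d where "d j = (if j < k then (if j = i then q - 2 else q - 1) else if j = k then 1 else 0)" for j
  have dq: "d j < q" for j using q2 by (simp add: d_def)
  have gen: "(\<Sum>j<k. d j * w j) + w i = (\<Sum>j<k. (q - 1) * w j)" for w :: "nat \<Rightarrow> nat"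
  proof -
    have "(\<Sum>j<k. d j * w j) = d i * w i + (\<Sum>j\<in>{..<k} - {i}. d j * w j)"
      using i by (subst sum.remove[of _ i]) auto
    moreover have "(\<Sum>j<k. (q - 1) * w j) = (q - 1) * w i + (\<Sum>j\<in>{..<k} - {i}. (q - 1) * w j)"
      using i by (subst sum.remove[of _ i]) auto
    moreover have "(\<Sum>j\<in>{..<k} - {i}. d j * w j) = (\<Sum>j\<in>{..<k} - {i}. (q - 1) * w j)"
      by (intro sum.cong) (auto simp: d_def)
    moreover have "d i * w i + w i = (q - 1) * w i" using q2 i
      by (simp add: d_def algebra_simps)
    ultimately show ?thesis by simp
  qed
  have split: "(\<Sum>j<n. d j * w j) = (\<Sum>j<k. d j * w j) + w k" for w :: "nat \<Rightarrow> nat"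
  proof -
    have "(\<Sum>j<n. d j * w j) = (\<Sum>j<Suc k. d j * w j)"
      using kn by (intro sum.mono_neutral_right) (auto simp: d_def)
    thus ?thesis by (simp add: d_def)
  qed
  have qi: "q ^ i < q ^ k" using pow_facts(1)[OF q2 i(2)] .
  have g: "(\<Sum>j<k. (q - 1) * q ^ j) + 1 = q ^ k" using geom_nat q2 by simp
  have uval: "(\<Sum>j<n. d j * q ^ j) = 2 * q ^ k - q ^ i - 1"
    using split[of "\<lambda>j. q ^ j"] gen[of "\<lambda>j. q ^ j"] g qi by linarith
  have dig: "digit q (2 * q ^ k - q ^ i - 1) j = d j" if "j < n" for j
    using digit_sum[of d q n j, OF dq] that uval by simp
  show "wt q n (2 * q ^ k - q ^ i - 1) = k * (q - 1)"
  proof -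
    have "wt q n (2 * q ^ k - q ^ i - 1) = (\<Sum>j<n. d j * 1)" unfolding wt_def using dig by simp
    also have "\<dots> = k * (q - 1)" using split[of "\<lambda>_. 1"] gen[of "\<lambda>_. 1"] by simp
    finally show ?thesis .
  qed
  show "Osum q n (2 * q ^ k - q ^ i - 1) = a * (q - 1) - 1"
  proof -
    have "Osum q n (2 * q ^ k - q ^ i - 1) = (\<Sum>j\<in>{j. j < n \<and> odd j}. d j)"
      unfolding Osum_def using dig by (intro sum.cong) auto
    also have "\<dots> = (\<Sum>j\<in>{j. j < k \<and> odd j}. d j)"
      using kn k by (intro sum.mono_neutral_right) (auto simp: d_def)
    also have "\<dots> = d i + (\<Sum>j\<in>{j. j < k \<and> odd j} - {i}. d j)"
      using i by (subst sum.remove[of _ i]) auto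
    also have "(\<Sum>j\<in>{j. j < k \<and> odd j} - {i}. d j) = (\<Sum>j\<in>{j. j < k \<and> odd j} - {i}. q - 1)"
      by (intro sum.cong) (auto simp: d_def)
    also have "\<dots> = (a - 1) * (q - 1)"
      using i card_odd_below[of a] k by (simp add: card_Diff_singleton)
    also have "d i = q - 2" using i by (simp add: d_def)
    finally have "Osum q n (2 * q ^ k - q ^ i - 1) = q - 2 + (a - 1) * (q - 1)" .
    moreover have "q - 2 + (a - 1) * (q - 1) = a * (q - 1) - 1" using q2 k(2)
      by (cases a) (auto simp: algebra_simps)
    ultimately show ?thesis by simp
  qed
  show "Esum q n (2 * q ^ k - q ^ i - 1) = a * (q - 1) + 1"
  proof -
    have "Esum q n (2 * q ^ k - q ^ i - 1) = (\<Sum>j\<in>{j. j < n \<and> even j}. d j)"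
      unfolding Esum_def using dig by (intro sum.cong) auto
    also have "\<dots> = (\<Sum>j\<in>insert k {j. j < k \<and> even j}. d j)"
      using kn k by (intro sum.mono_neutral_right) (auto simp: d_def)
    also have "\<dots> = d k + (\<Sum>j\<in>{j. j < k \<and> even j}. d j)" by simp
    also have "(\<Sum>j\<in>{j. j < k \<and> even j}. d j) = (\<Sum>j\<in>{j. j < k \<and> even j}. q - 1)"
      using i by (intro sum.cong) (auto simp: d_def)
    also have "\<dots> = a * (q - 1)" using card_even_below[of a] k by simp
    finally show ?thesis by (simp add: d_def)
  qed
  show "1 \<le> 2 * q ^ k - q ^ i - 1" using qi by linarith
  have "q ^ Suc k \<le> q ^ n" using kn q2 by (intro power_increasing) auto
  moreover have "2 * q ^ k \<le> q ^ Suc k" using q2 by simp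
  ultimately show "2 * q ^ k - q ^ i - 1 \<le> q ^ n - 1" using qi by linarith
qed

lemma pow_minus1_dvd:
  fixes x :: nat
  assumes "x \<ge> 1"
  shows "(x - 1) dvd (x ^ n - 1)"
proof (induction n)
  case 0 thus ?case by simp
next
  case (Suc n)
  have "x ^ n \<ge> 1" using assms by simp
  hence "x ^ Suc n - 1 = x * (x ^ n - 1) + (x - 1)" using assms
    by (simp add: algebra_simps)
  thus ?case using Suc by simp
qed

lemma basis_exists:
  fixes V :: "'a::{finite,field} set" and K :: "'a set"
  assumes sK: "subf K" and V0: "0 \<in> V" and Vadd: "\<And>x y. x \<in> V \<Longrightarrow> y \<in> V \<Longrightarrow> x + y \<in> V"
    and Vsc: "\<And>c x. c \<in> K \<Longrightarrow> x \<in> V \<Longrightarrow> c * x \<in> V" and cK: "card K \<ge> 2"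
  shows "\<exists>d b. (\<forall>i<d. b i \<in> V) \<and> good K b d \<and> spn K b d = V"
proof -
  have claim: "(\<exists>b. (\<forall>i<j. b i \<in> V) \<and> good K b j) \<or> (\<exists>d b. (\<forall>i<d. b i \<in> V) \<and> good K b d \<and> spn K b d = V)" for j
  proof (induction j)
    case 0 thus ?case by (auto simp: good_def)
  next
    case (Suc j)
    show ?case
    proof (cases "\<exists>b. (\<forall>i<j. b i \<in> V) \<and> good K b j")
      case False thus ?thesis using Suc by blast
    next
      case True
      then obtain b where b: "\<forall>i<j. b i \<in> V" "good K b j" by blast
      have sub: "spn K b j \<subseteq> V" using b(1) by (intro spn_subset[OF _ V0 Vadd Vsc]) auto
      show ?thesis
      proof (cases "spn K b j = V")
        case True thus ?thesis using b by blast
      next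
        case False
        then obtain v where v: "v \<in> V" "v \<notin> spn K b j" using sub by blast
        define b' where "b' = b(j := v)"
        have sc: "spn K b' s = spn K b s" if "s \<le> j" for s
          using that by (intro spn_cong) (auto simp: b'_def)
        have "good K b' (Suc j)" unfolding good_def
        proof (intro allI impI)
          fix s assume "s < Suc j"
          show "b' s \<notin> spn K b' s"
          proof (cases "s = j")
            case True thus ?thesis using v sc by (simp add: b'_def)
          next
            case False hence "s < j" using \<open>s < Suc j\<close> by simp
            thus ?thesis using b(2) sc unfolding good_def by (simp add: b'_def)
          qed
        qed
        moreover have "\<forall>i<Suc j. b' i \<in> V" using b v by (auto simp: b'_def less_Suc_eq)
        ultimately show ?thesis by blast
      qed
    qed
  qed
  have "\<not> (\<exists>b. (\<forall>i<card V + 1. b i \<in> V) \<and> good K b (card V + 1))"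
  proof
    assume "\<exists>b. (\<forall>i<card V + 1. b i \<in> V) \<and> good K b (card V + 1)"
    then obtain b where b: "\<forall>i<card V + 1. b i \<in> V" "good K b (card V + 1)" by blast
    have "spn K b (card V + 1) \<subseteq> V" using b(1) by (intro spn_subset[OF _ V0 Vadd Vsc]) auto
    hence "card (spn K b (card V + 1)) \<le> card V" by (intro card_mono) auto
    moreover have "card (spn K b (card V + 1)) = card K ^ (card V + 1)"
      using card_spn[OF sK _ b(2)] by simp
    moreover have "card V + 1 < 2 ^ (card V + 1)" by (rule less_exp)
    moreover have "2 ^ (card V + 1) \<le> card K ^ (card V + 1)" using cK by (rule power_mono) simp
    ultimately show False by linarith
  qed
  thus ?thesis using claim[of "card V + 1"] by blast
qed

theorem lemma5p5:
  fixes p l m n \<rho> \<rho>' q :: nat and r :: int and I :: "nat set"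
    and V :: "'a::{finite,field} set" and \<alpha> c :: 'a
  assumes "prime p" and "l \<ge> 1" and "q = p ^ l"
    and "card (UNIV :: 'a set) = q ^ n"
    and "primitive_elem \<alpha>"
    and "m \<ge> 1" and "n = 2 * m"
    and "\<rho> \<le> n - 1" and "\<rho> = 2 * \<rho>'"
    and "r = int (\<rho> * (q - 1))"
    and "I \<subseteq> Mr q m r" and "{0, 2} \<inter> I = {0}"
    and "dim_over (Fsub q) V (n - \<rho>)"
    and "\<not> dim_over (Fsub (q ^ 2)) V (m - \<rho>')"
    and "c \<in> Fsub q" and "c \<noteq> 0"
  shows "(\<lambda>g. if g \<in> V - {0} then c else 0) \<notin> code q n m \<alpha> r I"
proof
  assume xin: "(\<lambda>g. if g \<in> V - {0} then c else 0) \<in> code q n m \<alpha> r I"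
  note pp = assms(1) and l1 = assms(2) and qdef = assms(3) and card = assms(4) and prim = assms(5)
    and m1 = assms(6) and ndef = assms(7) and rho = assms(8) and rho' = assms(9) and rdef = assms(10)
    and I2 = assms(12) and dimK = assms(13) and ndimK2 = assms(14)
  define k where "k = n - \<rho>"
  define K where "K = (Fsub q :: 'a set)"
  define K2 where "K2 = (Fsub (q ^ 2) :: 'a set)"
  have chp: "CHAR('a) = p" using ff_CHAR[OF pp, of "l * n"] card qdef by (simp add: power_mult)
  have pch: "prime CHAR('a)" using chp pp by simp
  have p2: "p \<ge> 2" using pp prime_ge_2_nat by blast
  have q2: "q \<ge> 2"
  proof -
    have "p ^ 1 \<le> p ^ l" using l1 p2 by (intro power_increasing) auto
    thus ?thesis using p2 qdef by simp
  qed
  have qc: "q = CHAR('a) ^ l" using chp qdef by simp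
  have qc2: "q ^ 2 = CHAR('a) ^ (2 * l)" using qc by (simp add: power_mult mult.commute)
  have sK: "subf K" unfolding K_def by (rule Fsub_subf[OF pch qc])
  have sK2: "subf K2" unfolding K2_def by (rule Fsub_subf[OF pch qc2])
  have cardK: "card K = q"
  proof -
    have "(q - 1) dvd (q ^ n - 1)" using pow_minus1_dvd q2 by simp
    hence "q \<le> card K" unfolding K_def using card_Fsub_ge[OF prim q2] card by simp
    moreover have "card K \<le> q" unfolding K_def by (rule card_Fsub_le[OF q2])
    ultimately show ?thesis by simp
  qed
  have q22: "q ^ 2 \<ge> 2" using q2 by (simp add: power2_eq_square) (metis le_trans mult_le_mono2 nat_mult_1 one_le_numeral le_square)
  have cardK2: "card K2 = q ^ 2"
  proof -
    have "q ^ n = (q ^ 2) ^ m" using ndef by (simp add: power_mult)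
    moreover have "(q ^ 2 - 1) dvd ((q ^ 2) ^ m - 1)" using pow_minus1_dvd q22 by simp
    ultimately have "(q ^ 2 - 1) dvd (q ^ n - 1)" by simp
    hence "q ^ 2 \<le> card K2" unfolding K2_def using card_Fsub_ge[OF prim q22] card by simp
    moreover have "card K2 \<le> q ^ 2" unfolding K2_def by (rule card_Fsub_le[OF q22])
    ultimately show ?thesis by simp
  qed
  obtain b where b: "\<forall>i<k. b i \<in> V" "std_indep K b k"
      "\<forall>v\<in>V. \<exists>c. (\<forall>i<k. c i \<in> K) \<and> v = (\<Sum>i<k. c i * b i)"
    and subV: "subspace_over K V"
    using dimK unfolding dim_over_def std_indep_def k_def K_def by blast
  have V0: "0 \<in> V" and Vadd: "\<And>x y. x \<in> V \<Longrightarrow> y \<in> V \<Longrightarrow> x + y \<in> V"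
    and Vsc: "\<And>a x. a \<in> K \<Longrightarrow> x \<in> V \<Longrightarrow> a * x \<in> V"
    using subV unfolding subspace_over_def by auto
  have Vspn: "V = spn K b k"
  proof
    show "V \<subseteq> spn K b k" using b(3) by (auto simp: spn_char)
    show "spn K b k \<subseteq> V" using b(1) by (intro spn_subset[OF _ V0 Vadd Vsc]) auto
  qed
  have gd: "good K b k" by (rule std_indep_good[OF sK b(2)])
  have cardV: "card V = q ^ k" using card_spn[OF sK _ gd] Vspn cardK by simp
  have notK2: "\<not> (\<forall>a\<in>K2. \<forall>x\<in>V. a * x \<in> V)"
  proof
    assume cl2: "\<forall>a\<in>K2. \<forall>x\<in>V. a * x \<in> V"
    obtain d b2 where d: "\<forall>i<d. b2 i \<in> V" "good K2 b2 d" "spn K2 b2 d = V"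
      using basis_exists[OF sK2 V0 Vadd _] cl2 cardK2 q22 by metis
    have "card V = (q ^ 2) ^ d" using card_spn[OF sK2 _ d(2)] d(3) cardK2 by simp
    hence "q ^ k = q ^ (2 * d)" using cardV by (simp add: power_mult)
    hence "k = 2 * d" using q2 by (simp add: power_inject_exp)
    hence dd: "d = m - \<rho>'" unfolding k_def using ndef rho' by simp
    have "dim_over K2 V d"
      unfolding dim_over_def subspace_over_def
    proof (intro conjI)
      show "0 \<in> V" by (rule V0)
      show "\<forall>x\<in>V. \<forall>y\<in>V. x + y \<in> V" using Vadd by blast
      show "\<forall>c\<in>K2. \<forall>x\<in>V. c * x \<in> V" by (rule cl2)
      show "\<exists>b. (\<forall>i<d. b i \<in> V) \<and> (\<forall>c. (\<forall>i<d. c i \<in> K2) \<longrightarrow> (\<Sum>i<d. c i * b i) = 0 \<longrightarrow> (\<forall>i<d. c i = 0))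
          \<and> (\<forall>v\<in>V. \<exists>c. (\<forall>i<d. c i \<in> K2) \<and> v = (\<Sum>i<d. c i * b i))"
        using d good_std_indep[OF sK2 d(2)] unfolding std_indep_def spn_char[symmetric] by blast
    qed
    thus False using ndimK2 dd K2_def by simp
  qed
  have kn: "k < n"
  proof (rule ccontr)
    assume "\<not> k < n"
    hence "k = n" unfolding k_def by simp
    hence "card V = card (UNIV :: 'a set)" using cardV card by simp
    hence "V = UNIV" by (simp add: card_subset_eq)
    thus False using notK2 by simp
  qed
  obtain a where ka: "k = 2 * a" using ndef rho' unfolding k_def by (metis diff_mult_distrib2)
  have a1: "a \<ge> 1" using ka rho ndef m1 unfolding k_def by (cases a) auto
  obtain cc where cc: "cc k = 1" "\<forall>j>k. cc j = 0"
    "\<forall>x. (\<Prod>g\<in>spn K b k. x - g) = (\<Sum>j\<le>k. cc j * x ^ (q ^ j))"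
    using Lpoly_exists[OF pch qc q2 _ ] cardK gd unfolding K_def by blast
  have Lz: "(\<Sum>j\<le>k. cc j * x ^ (q ^ j)) = 0 \<longleftrightarrow> x \<in> V" for x
  proof -
    have "(\<Sum>j\<le>k. cc j * x ^ (q ^ j)) = (\<Prod>g\<in>V. x - g)" using cc(3) Vspn by simp
    moreover have "(\<Prod>g\<in>V. x - g) = 0 \<longleftrightarrow> x \<in> V" by (simp add: prod_zero_iff)
    ultimately show ?thesis by simp
  qed
  obtain i where i: "odd i" "i < k" "cc i \<noteq> 0"
  proof (rule ccontr)
    assume "\<not> thesis"
    hence odd0: "\<forall>j. odd j \<longrightarrow> j < k \<longrightarrow> cc j = 0" using that by blast
    have "\<forall>a\<in>K2. \<forall>x\<in>V. a * x \<in> V"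
    proof (intro ballI)
      fix lam x assume lam: "lam \<in> K2" and x: "x \<in> V"
      have "(\<Sum>j\<le>k. cc j * (lam * x) ^ (q ^ j)) = (\<Sum>j\<le>k. lam * (cc j * x ^ (q ^ j)))"
      proof (intro sum.cong refl)
        fix j assume j: "j \<in> {..k}"
        show "cc j * (lam * x) ^ (q ^ j) = lam * (cc j * x ^ (q ^ j))"
        proof (cases "odd j")
          case True
          hence "j < k" using j ka by (auto simp: le_less)
          thus ?thesis using odd0 True by simp
        next
          case False
          then obtain e where "j = 2 * e" by blast
          hence "lam ^ (q ^ j) = lam" using Fsub_pow[of lam "q ^ 2" e] lam K2_def
            by (simp add: power_mult)
          thus ?thesis by (simp add: power_mult_distrib)
        qed
      qed
      also have "\<dots> = 0" using Lz x by (simp add: sum_distrib_left[symmetric])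
      finally show "lam * x \<in> V" using Lz by blast
    qed
    thus False using notK2 by blast
  qed
  have Vdiff: "x - y \<in> V" if "x \<in> V" "y \<in> V" for x y
  proof -
    have "- 1 \<in> K" using subfD[OF sK] by simp
    hence "(- 1) * y \<in> V" using Vsc that by blast
    hence my: "- y \<in> V" by simp
    have "x + (- y) \<in> V" by (rule Vadd[OF that(1) my])
    thus ?thesis by (simp only: diff_conv_add_uminus)
  qed
  have q1k: "q ^ k \<ge> 1" using q2 by simp
  have S0: "(\<Sum>g\<in>V. g ^ t) = 0" if "t + 1 < q ^ k" for t
    using S_init(1)[OF _ V0 Vdiff cardV q1k that] by simp
  define P0 where "P0 = (\<Prod>h\<in>V - {0}. - h)"
  have P0: "P0 \<noteq> 0" unfolding P0_def by (simp add: prod_zero_iff)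
  have S1: "(\<Sum>g\<in>V. g ^ (q ^ k - 1)) = P0"
    unfolding P0_def using S_init(2)[OF _ V0 Vdiff cardV q1k] by simp
  have Su: "(\<Sum>g\<in>V. g ^ (2 * q ^ k - q ^ i - 1)) = - (cc i * P0)"
  proof -
    have Lg: "\<And>g. g \<in> V \<Longrightarrow> (\<Sum>j\<le>k. cc j * g ^ (q ^ j)) = 0" using Lz by blast
    show ?thesis by (rule S_key[OF q2 i(2) Lg cc(1) S0 S1])
  qed
  define u where "u = 2 * q ^ k - q ^ i - 1"
  have Su0: "(\<Sum>g\<in>V. g ^ u) \<noteq> 0" unfolding u_def Su using i(3) P0 by simp
  have dg: "wt q n u = k * (q - 1)" "Osum q n u = a * (q - 1) - 1" "Esum q n u = a * (q - 1) + 1"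
      "1 \<le> u" "u \<le> q ^ n - 1"
    unfolding u_def using digits_u[OF q2 ka a1 i(1) i(2) kn] by auto
  have "\<alpha> ^ u \<in> Theta q n \<alpha> r 2"
  proof -
    have le: "\<rho> * (q - 1) \<le> n * (q - 1)" using rho by (intro mult_right_mono) auto
    have "wt q n u = n * (q - 1) - \<rho> * (q - 1)" using dg(1) unfolding k_def by (simp add: diff_mult_distrib)
    hence "int (wt q n u) = int (n * (q - 1)) - int (\<rho> * (q - 1))" using le by (simp only: of_nat_diff)
    hence "int (wt q n u) = int (n * (q - 1)) - r" using rdef by simp
    moreover have "\<bar>int (Osum q n u) - int (Esum q n u)\<bar> = int 2"
    proof -
      have "a * (q - 1) \<ge> 1" using a1 q2 by simp
      thus ?thesis using dg(2,3) by (simp add: of_nat_diff)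
    qed
    ultimately show ?thesis unfolding Theta_def using dg(5) by blast
  qed
  moreover have "2 \<in> Mr q m r - I"
  proof -
    have "m \<ge> 2" using kn ka a1 ndef by linarith
    moreover have "m * 1 \<le> m * (q - 1)" using q2 by (intro mult_left_mono) auto
    ultimately have "2 \<le> m * (q - 1)" by linarith
    moreover have "even r" unfolding rdef rho' by simp
    moreover have "2 \<notin> I"
    proof
      assume "2 \<in> I" hence "(2::nat) \<in> {0, 2} \<inter> I" by simp
      hence "(2::nat) \<in> {0}" using I2 by simp
      thus False by simp
    qed
    ultimately show ?thesis unfolding Mr_def by simp
  qed
  ultimately have "\<alpha> ^ u \<in> ZrI q n m \<alpha> r I" unfolding ZrI_def by blast
  moreover have "\<forall>u\<in>{1..q ^ n - 1}. \<alpha> ^ u \<in> ZrI q n m \<alpha> r I \<longrightarrow>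
          (\<Sum>g\<in>{g. g \<noteq> 0}. (if g \<in> V - {0} then c else 0) * g ^ u) = 0"
    using xin unfolding code_def by blast
  moreover have "u \<in> {1..q ^ n - 1}" using dg(4,5) by simp
  ultimately have sum0: "(\<Sum>g\<in>{g. g \<noteq> 0}. (if g \<in> V - {0} then c else 0) * g ^ u) = 0"
    by blast
  have "(\<Sum>g\<in>{g. g \<noteq> 0}. (if g \<in> V - {0} then c else 0) * g ^ u) = (\<Sum>g\<in>V - {0}. c * g ^ u)"
    by (rule sum.mono_neutral_cong_right) auto
  also have "\<dots> = c * (\<Sum>g\<in>V. g ^ u)"
    using dg(4) by (subst sum.remove[of V 0, OF _ V0]) (auto simp: sum_distrib_left power_0_left)
  finally have "c * (\<Sum>g\<in>V. g ^ u) = 0" using sum0 by simp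
  thus False using Su0 assms(16) by simp
qed

end
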